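(* Let $\lambda$ be a positive integer with $\gcd(\lambda,n)=1$ and let $1\le j\le n-1$. Then $A/R_jA\cong A/R_{\lambda j}A$ as graded $\Bbbk$-vector spaces; equivalently $\bar e_jE\cong\bar e_{\lambda j}E$ as graded vector spaces. In particular, if $n$ is prime then $\bar e_1E\cong\bar e_jE$ for all $j=2,\dots,n-1$.
   Context: $\Bbbk$ is an algebraically closed field of characteristic zero, $n\ge2$, $A=\Bbbk_{-1}[x_0,\dots,x_{n-1}]$ is generated by degree-one $x_0,\dots,x_{n-1}$ with $x_ix_j=-x_jx_i$ ($i\ne j$), $C_n=\langle\sigma\rangle$ acts by $\sigma(x_i)=x_{i+1}$ (indices in $\mathbb{Z}_n$). Let $\omega$ be a primitive $n$th root of unity and $R_j=\{a\in A\mid\sigma(a)=\omega^{-j}a\}$ for $j\in\mathbb{Z}_n$; $R_jA$ is the right ideal generated by $R_j$. $E=(A\#C_n)/(e_0)$ where $e_0=\frac1n\sum_{g\in C_n}g$, $e_\alpha=\frac1n\sum_{i=0}^{n-1}(\omega^\alpha\sigma)^i$, and $\bar e_j$ is the image of $e_j$ in $E$. *)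

theory Defs
  imports "HOL-Computational_Algebra.Polynomial" "HOL-Library.Function_Algebras"
begin

text \<open>Concrete model of the skew polynomial ring A = k_{-1}[x_0,...,x_{n-1}].
  A monomial x_0^{a_0} ... x_{n-1}^{a_{n-1}} (in this fixed order) is an exponent
  vector a :: nat => nat with a i = 0 for i >= n.  An element of A is a finitely
  supported coefficient function on monomials.\<close>

definition alg_closed :: "'k::field itself \<Rightarrow> bool" where
  "alg_closed _ = (\<forall>p::'k poly. degree p \<ge> 1 \<longrightarrow> (\<exists>x. poly p x = 0))"

definition mons :: "nat \<Rightarrow> (nat \<Rightarrow> nat) set" where
  "mons n = {a. \<forall>i\<ge>n. a i = 0}"

definition Aset :: "nat \<Rightarrow> ((nat \<Rightarrow> nat) \<Rightarrow> 'k::field) set" where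
  "Aset n = {f. finite {a. f a \<noteq> 0} \<and> (\<forall>a. f a \<noteq> 0 \<longrightarrow> a \<in> mons n)}"

definition mdeg :: "nat \<Rightarrow> (nat \<Rightarrow> nat) \<Rightarrow> nat" where
  "mdeg n a = (\<Sum>i<n. a i)"

definition homog :: "nat \<Rightarrow> nat \<Rightarrow> ((nat \<Rightarrow> nat) \<Rightarrow> 'k::field) \<Rightarrow> bool" where
  "homog n d f = (\<forall>a. f a \<noteq> 0 \<longrightarrow> mdeg n a = d)"

text \<open>x^a * x^b = tw a b * x^(a+b), from x_i x_j = - x_j x_i (i \<noteq> j).\<close>
definition tw :: "nat \<Rightarrow> (nat \<Rightarrow> nat) \<Rightarrow> (nat \<Rightarrow> nat) \<Rightarrow> 'k::field" where
  "tw n a b = (-1) ^ (\<Sum>i<n. \<Sum>j<i. a i * b j)"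

definition amult :: "nat \<Rightarrow> ((nat \<Rightarrow> nat) \<Rightarrow> 'k::field) \<Rightarrow> ((nat \<Rightarrow> nat) \<Rightarrow> 'k) \<Rightarrow> ((nat \<Rightarrow> nat) \<Rightarrow> 'k)" where
  "amult n f g = (\<lambda>c. if c \<in> mons n then
      (\<Sum>a\<in>{a\<in>mons n. \<forall>i. a i \<le> c i}. tw n a (\<lambda>i. c i - a i) * f a * g (\<lambda>i. c i - a i))
    else 0)"

definition oneA :: "(nat \<Rightarrow> nat) \<Rightarrow> 'k::field" where
  "oneA = (\<lambda>m. if m = (\<lambda>_. 0) then 1 else 0)"

text \<open>The automorphism sigma(x_i) = x_{i+1}: sigma(x^a) = sgn_shift a * x^c where
  c_{(i+1) mod n} = a_i; the sign comes from moving x_0^{a_{n-1}} to the front.\<close>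
definition sgn_shift :: "nat \<Rightarrow> (nat \<Rightarrow> nat) \<Rightarrow> 'k::field" where
  "sgn_shift n a = (-1) ^ (a (n - 1) * (\<Sum>i<n - 1. a i))"

definition unshift :: "nat \<Rightarrow> (nat \<Rightarrow> nat) \<Rightarrow> (nat \<Rightarrow> nat)" where
  "unshift n c = (\<lambda>i. if i < n then c ((i + 1) mod n) else 0)"

definition asigma :: "nat \<Rightarrow> ((nat \<Rightarrow> nat) \<Rightarrow> 'k::field) \<Rightarrow> ((nat \<Rightarrow> nat) \<Rightarrow> 'k)" where
  "asigma n f = (\<lambda>c. if c \<in> mons n then sgn_shift n (unshift n c) * f (unshift n c) else 0)"

definition Rj :: "nat \<Rightarrow> 'k::field \<Rightarrow> nat \<Rightarrow> ((nat \<Rightarrow> nat) \<Rightarrow> 'k) set" where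
  "Rj n \<omega> j = {f \<in> Aset n. asigma n f = (\<lambda>m. (inverse \<omega>) ^ j * f m)}"

definition RjA :: "nat \<Rightarrow> 'k::field \<Rightarrow> nat \<Rightarrow> ((nat \<Rightarrow> nat) \<Rightarrow> 'k) set" where
  "RjA n \<omega> j = {sum_list (map (\<lambda>(r, a). amult n r a) ps) | ps. set ps \<subseteq> Rj n \<omega> j \<times> Aset n}"

definition smulA :: "'k::field \<Rightarrow> ((nat \<Rightarrow> nat) \<Rightarrow> 'k) \<Rightarrow> ((nat \<Rightarrow> nat) \<Rightarrow> 'k)" where
  "smulA c f = (\<lambda>m. c * f m)"

text \<open>Smash product A # C_n: u represents sum_{g<n} (u g) sigma^g.\<close>
definition Sset :: "nat \<Rightarrow> (nat \<Rightarrow> (nat \<Rightarrow> nat) \<Rightarrow> 'k::field) set" where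
  "Sset n = {u. (\<forall>g. u g \<in> Aset n) \<and> (\<forall>g\<ge>n. u g = 0)}"

definition smult :: "nat \<Rightarrow> (nat \<Rightarrow> (nat \<Rightarrow> nat) \<Rightarrow> 'k::field) \<Rightarrow> (nat \<Rightarrow> (nat \<Rightarrow> nat) \<Rightarrow> 'k) \<Rightarrow> (nat \<Rightarrow> (nat \<Rightarrow> nat) \<Rightarrow> 'k)" where
  "smult n u v = (\<lambda>k. if k < n then
      (\<Sum>g<n. amult n (u g) ((asigma n ^^ g) (v ((k + n - g) mod n))))
    else 0)"

definition smulS :: "'k::field \<Rightarrow> (nat \<Rightarrow> (nat \<Rightarrow> nat) \<Rightarrow> 'k) \<Rightarrow> (nat \<Rightarrow> (nat \<Rightarrow> nat) \<Rightarrow> 'k)" where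
  "smulS c u = (\<lambda>g m. c * u g m)"

definition homogS :: "nat \<Rightarrow> nat \<Rightarrow> (nat \<Rightarrow> (nat \<Rightarrow> nat) \<Rightarrow> 'k::field) \<Rightarrow> bool" where
  "homogS n d u = (\<forall>g. homog n d (u g))"

text \<open>e_alpha = (1/n) sum_{i<n} (omega^alpha sigma)^i.\<close>
definition eidem :: "nat \<Rightarrow> 'k::field \<Rightarrow> nat \<Rightarrow> (nat \<Rightarrow> (nat \<Rightarrow> nat) \<Rightarrow> 'k)" where
  "eidem n \<omega> \<alpha> = (\<lambda>g m. if g < n then (1 / of_nat n) * \<omega> ^ (\<alpha> * g) * oneA m else 0)"

definition Ie0 :: "nat \<Rightarrow> 'k::field \<Rightarrow> (nat \<Rightarrow> (nat \<Rightarrow> nat) \<Rightarrow> 'k) set" where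
  "Ie0 n \<omega> = {sum_list (map (\<lambda>(u, v). smult n (smult n u (eidem n \<omega> 0)) v) ps) | ps.
                set ps \<subseteq> Sset n \<times> Sset n}"

text \<open>e_j (A # C_n); its image in E is ebar_j E = e_j(A#C_n) / (e_j(A#C_n) \<inter> (e_0)).\<close>
definition eS :: "nat \<Rightarrow> 'k::field \<Rightarrow> nat \<Rightarrow> (nat \<Rightarrow> (nat \<Rightarrow> nat) \<Rightarrow> 'k) set" where
  "eS n \<omega> j = {smult n (eidem n \<omega> j) u | u. u \<in> Sset n}"

text \<open>Isomorphism of graded vector spaces D/U \<cong> D'/U' (U, U' graded subspaces):
  a degree-preserving linear map D \<rightarrow> D' inducing a bijection of the quotients.\<close>
definition graded_quot_iso ::
  "(nat \<Rightarrow> 'v::ab_group_add \<Rightarrow> bool) \<Rightarrow> ('k::field \<Rightarrow> 'v \<Rightarrow> 'v) \<Rightarrow> 'v set \<Rightarrow> 'v set \<Rightarrow> 'v set \<Rightarrow> 'v set \<Rightarrow> bool" where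
  "graded_quot_iso H sm D U D' U' =
    (\<exists>\<phi>. (\<forall>x\<in>D. \<phi> x \<in> D')
       \<and> (\<forall>x\<in>D. \<forall>y\<in>D. \<phi> (x + y) = \<phi> x + \<phi> y)
       \<and> (\<forall>c. \<forall>x\<in>D. \<phi> (sm c x) = sm c (\<phi> x))
       \<and> (\<forall>x\<in>D. \<forall>d. H d x \<longrightarrow> H d (\<phi> x))
       \<and> (\<forall>x\<in>D. \<phi> x \<in> U' \<longleftrightarrow> x \<in> U)
       \<and> (\<forall>y\<in>D'. \<exists>x\<in>D. y - \<phi> x \<in> U'))"

end

theory Submission
  imports Defs
begin


definition perm :: "nat \<Rightarrow> (nat \<Rightarrow> nat) \<Rightarrow> (nat \<Rightarrow> nat) \<Rightarrow> bool" where
  "perm n p q = (\<forall>i<n. p i < n \<and> q i < n \<and> p (q i) = i \<and> q (p i) = i)"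

definition cmp :: "nat \<Rightarrow> (nat \<Rightarrow> nat) \<Rightarrow> (nat \<Rightarrow> nat) \<Rightarrow> (nat \<Rightarrow> nat)" where
  "cmp n c p = (\<lambda>i. if i < n then c (p i) else 0)"

definition Eexp :: "nat \<Rightarrow> (nat \<Rightarrow> nat) \<Rightarrow> (nat \<Rightarrow> nat) \<Rightarrow> nat" where
  "Eexp n p a = (\<Sum>i<n. \<Sum>k<n. if i < k \<and> p k < p i then a i * a k else 0)"

definition Pp :: "nat \<Rightarrow> (nat \<Rightarrow> nat) \<Rightarrow> ((nat \<Rightarrow> nat) \<Rightarrow> 'k::field) \<Rightarrow> ((nat \<Rightarrow> nat) \<Rightarrow> 'k)" where
  "Pp n p f = (\<lambda>c. if c \<in> mons n then (-1) ^ Eexp n p (cmp n c p) * f (cmp n c p) else 0)"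

lemma perm_sym: "perm n p q \<Longrightarrow> perm n q p" by (auto simp: perm_def)

lemma perm_comp: "perm n p p' \<Longrightarrow> perm n q q' \<Longrightarrow> perm n (\<lambda>i. p (q i)) (\<lambda>i. q' (p' i))"
  by (auto simp: perm_def)

lemma perm_bij: "perm n p q \<Longrightarrow> bij_betw p {..<n} {..<n}"
  by (rule bij_betw_byWitness[where f'=q]) (auto simp: perm_def)

lemma perm_inj: "perm n p q \<Longrightarrow> i < n \<Longrightarrow> k < n \<Longrightarrow> i \<noteq> k \<Longrightarrow> p i \<noteq> p k"
  by (metis perm_def)

lemma cmp_mons[simp]: "cmp n c p \<in> mons n" by (simp add: cmp_def mons_def)

lemma cmp_cmp: "\<forall>i<n. q i < n \<Longrightarrow> cmp n (cmp n c p) q = cmp n c (\<lambda>i. p (q i))"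
  by (auto simp: cmp_def)

lemma cmp_id: "c \<in> mons n \<Longrightarrow> \<forall>i<n. p i = i \<Longrightarrow> cmp n c p = c"
  by (auto simp: cmp_def mons_def)

lemma cmp_cong: "\<forall>i<n. p i = q i \<Longrightarrow> cmp n c p = cmp n c q"
  by (auto simp: cmp_def)

lemma Eexp_cong: "\<forall>i<n. p i = q i \<Longrightarrow> Eexp n p a = Eexp n q a"
  unfolding Eexp_def by (intro sum.cong refl) auto

lemma Pp_cong: "\<forall>i<n. p i = q i \<Longrightarrow> Pp n p = Pp n q"
  using cmp_cong[of n p q] Eexp_cong[of n p q] unfolding Pp_def by (intro ext) simp

lemma Eexp_id: "\<forall>i<n. p i = i \<Longrightarrow> Eexp n p a = 0"
  unfolding Eexp_def by (intro sum.neutral ballI) auto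

lemma Pp_id: "\<forall>i<n. p i = i \<Longrightarrow> \<forall>c. c \<notin> mons n \<longrightarrow> f c = 0 \<Longrightarrow> Pp n p f = f"
  by (intro ext) (auto simp: Pp_def Eexp_id cmp_id)

lemma sum_sym2: "2 * (\<Sum>i<n. \<Sum>k<n. g i k) = (\<Sum>i<n. \<Sum>k<n. g i k + g k i)" for g :: "nat \<Rightarrow> nat \<Rightarrow> nat"
proof -
  have "(\<Sum>i<n. \<Sum>k<n. g k i) = (\<Sum>i<n. \<Sum>k<n. g i k)" by (rule sum.swap)
  thus ?thesis by (simp add: sum.distrib)
qed

lemma reindex2:
  assumes "perm n q q'"
  shows "(\<Sum>i<n. \<Sum>k<n. g i k) = (\<Sum>i<n. \<Sum>k<n. g (q i) (q k))"
proof -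
  have b: "bij_betw q {..<n} {..<n}" using perm_bij[OF assms] .
  have "(\<Sum>i<n. \<Sum>k<n. g (q i) (q k)) = (\<Sum>i<n. \<Sum>k<n. g (q i) k)"
    by (intro sum.cong refl sum.reindex_bij_betw[OF b])
  also have "\<dots> = (\<Sum>i<n. \<Sum>k<n. g i k)"
    by (rule sum.reindex_bij_betw[OF b, where g = "\<lambda>i. \<Sum>k<n. g i k"])
  finally show ?thesis by simp
qed



lemma cocycle_nat:
  assumes P: "perm n p p'" and Q: "perm n q q'"
  shows "Eexp n p b + Eexp n q (cmp n b q) = Eexp n (\<lambda>i. p (q i)) (cmp n b q)
     + 2 * (\<Sum>i<n. \<Sum>k<n. if i < k \<and> q k < q i \<and> p (q i) < p (q k) then cmp n b q i * cmp n b q k else 0)"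
  (is "?A + ?B = ?C + 2 * ?F")
proof -
  define x where "x = cmp n b q"
  have xq: "\<And>i. i < n \<Longrightarrow> b (q i) = x i" by (simp add: x_def cmp_def)
  define gA where "gA = (\<lambda>i k. if q i < q k \<and> p (q k) < p (q i) then x i * x k else 0)"
  define gB where "gB = (\<lambda>i k. if i < k \<and> q k < q i then x i * x k else 0)"
  define gC where "gC = (\<lambda>i k. if i < k \<and> p (q k) < p (q i) then x i * x k else 0)"
  define gF where "gF = (\<lambda>i k. if i < k \<and> q k < q i \<and> p (q i) < p (q k) then x i * x k else 0)"
  have A: "?A = (\<Sum>i<n. \<Sum>k<n. gA i k)"
    unfolding Eexp_def
    by (subst reindex2[OF Q]) (intro sum.cong refl, simp add: gA_def xq)
  have B: "?B = (\<Sum>i<n. \<Sum>k<n. gB i k)" unfolding Eexp_def gB_def x_def ..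
  have C: "?C = (\<Sum>i<n. \<Sum>k<n. gC i k)" unfolding Eexp_def gC_def x_def ..
  have F: "?F = (\<Sum>i<n. \<Sum>k<n. gF i k)" unfolding gF_def x_def ..
  have pw: "gA i k + gA k i + (gB i k + gB k i) = gC i k + gC k i + 2 * (gF i k + gF k i)"
    if "i < n" "k < n" for i k
  proof -
    have q1: "i \<noteq> k \<Longrightarrow> q i \<noteq> q k" using perm_inj[OF Q] that by blast
    have q2: "i \<noteq> k \<Longrightarrow> p (q i) \<noteq> p (q k)" using perm_inj[OF P, of "q i" "q k"] q1 Q that
      by (simp add: perm_def)
    have c: "x k * x i = x i * x k" by simp
    show ?thesis
    proof (cases "i < k")
      case True
      then show ?thesis using q1 q2 unfolding gA_def gB_def gC_def gF_def c
        by (cases "q i < q k"; cases "p (q i) < p (q k)") auto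
    next
      case False
      then show ?thesis using q1 q2 unfolding gA_def gB_def gC_def gF_def c
        by (cases "i = k"; cases "q i < q k"; cases "p (q i) < p (q k)") auto
    qed
  qed
  have "2 * (?A + ?B) = 2 * (?C + 2 * ?F)"
  proof -
    have "2 * (?A + ?B) = 2 * (\<Sum>i<n. \<Sum>k<n. gA i k) + 2 * (\<Sum>i<n. \<Sum>k<n. gB i k)"
      using A B by simp
    also have "\<dots> = (\<Sum>i<n. \<Sum>k<n. gA i k + gA k i + (gB i k + gB k i))"
      by (simp only: sum_sym2 sum.distrib[symmetric])
    also have "\<dots> = (\<Sum>i<n. \<Sum>k<n. gC i k + gC k i + 2 * (gF i k + gF k i))"
      by (intro sum.cong refl pw) auto
    also have "\<dots> = 2 * (\<Sum>i<n. \<Sum>k<n. gC i k) + 2 * (2 * (\<Sum>i<n. \<Sum>k<n. gF i k))"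
      using sum_sym2[where g=gC and n=n] sum_sym2[where g=gF and n=n] by (simp add: sum.distrib sum_distrib_left)
    finally show ?thesis using C F by simp
  qed
  thus ?thesis by simp
qed

lemma neg1_pow_even: "((-1::'k::field) ^ (a + 2 * f)) = (-1) ^ a"
  by (simp add: power_add power_mult)

lemma cocycle:
  assumes P: "perm n p p'" and Q: "perm n q q'"
  shows "(-1::'k::field) ^ Eexp n p b * (-1) ^ Eexp n q (cmp n b q) = (-1) ^ Eexp n (\<lambda>i. p (q i)) (cmp n b q)"
  by (simp only: power_add[symmetric] cocycle_nat[OF P Q] neg1_pow_even)

lemma Pp_comp:
  assumes P: "perm n p p'" and Q: "perm n q q'"
  shows "Pp n p (Pp n q f) = Pp n (\<lambda>i. p (q i)) f"
proof (rule ext)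
  fix c
  have qn: "\<forall>i<n. q i < n" using Q by (simp add: perm_def)
  show "Pp n p (Pp n q f) c = Pp n (\<lambda>i. p (q i)) f c"
    unfolding Pp_def using cocycle[OF P Q, of "cmp n c p", where 'k='a]
    by (simp add: cmp_cmp[OF qn] mult.assoc[symmetric])
qed

lemma Pp_inv:
  assumes P: "perm n p q" and f: "\<forall>c. c \<notin> mons n \<longrightarrow> f c = 0"
  shows "Pp n q (Pp n p f) = f"
proof -
  have "Pp n (\<lambda>i. q (p i)) f = f" using P by (intro Pp_id f) (simp add: perm_def)
  moreover have "Pp n q (Pp n p f) = Pp n (\<lambda>i. q (p i)) f" by (rule Pp_comp[OF perm_sym[OF P] P])
  ultimately show ?thesis by simp
qed



lemma lt_full: "(\<Sum>i<n. \<Sum>j<i. f i j) = (\<Sum>i<n. \<Sum>k<n. if k < i then f i k else 0)"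
  for f :: "nat \<Rightarrow> nat \<Rightarrow> 'a::comm_monoid_add"
proof (rule sum.cong[OF refl])
  fix i assume "i \<in> {..<n}"
  hence e: "{..<i} = {k\<in>{..<n}. k < i}" by auto
  thus "(\<Sum>j<i. f i j) = (\<Sum>k<n. if k < i then f i k else 0)"
    using sum.inter_filter[of "{..<n}" "f i" "\<lambda>k. k<i"] e by simp
qed

lemma mult_sign_nat:
  fixes a b :: "nat \<Rightarrow> nat"
  assumes P: "perm n p p'"
  defines "x \<equiv> cmp n a p" and "y \<equiv> cmp n b p"
  shows "(\<Sum>i<n. \<Sum>j<i. a i * b j) + Eexp n p x + Eexp n p y
     + 2 * (\<Sum>i<n. \<Sum>k<n. if k < i \<and> p i < p k then x i * y k else 0)
   = Eexp n p (\<lambda>i. x i + y i) + (\<Sum>i<n. \<Sum>j<i. x i * y j)"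
proof -
  have xp: "\<And>i. i < n \<Longrightarrow> a (p i) = x i" "\<And>i. i < n \<Longrightarrow> b (p i) = y i"
    by (simp_all add: x_def y_def cmp_def)
  define gT where "gT = (\<lambda>i k. if p k < p i then x i * y k else 0)"
  define g1 where "g1 = (\<lambda>i k. if i < k \<and> p k < p i then x i * x k else 0)"
  define g2 where "g2 = (\<lambda>i k. if i < k \<and> p k < p i then y i * y k else 0)"
  define gG where "gG = (\<lambda>i k. if k < i \<and> p i < p k then x i * y k else 0)"
  define gM1 where "gM1 = (\<lambda>i k. if i < k \<and> p k < p i then x i * y k else 0)"
  define gM2 where "gM2 = (\<lambda>i k. if i < k \<and> p k < p i then y i * x k else 0)"
  define gK where "gK = (\<lambda>i k. if k < i then x i * y k else 0)"
  have T: "(\<Sum>i<n. \<Sum>j<i. a i * b j) = (\<Sum>i<n. \<Sum>k<n. gT i k)"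
    unfolding lt_full by (subst reindex2[OF P]) (intro sum.cong refl, simp add: gT_def xp)
  have E: "Eexp n p (\<lambda>i. x i + y i) = (\<Sum>i<n. \<Sum>k<n. g1 i k + g2 i k + gM1 i k + gM2 i k)"
    unfolding Eexp_def g1_def g2_def gM1_def gM2_def
    by (intro sum.cong refl) (simp add: algebra_simps)
  have M2: "(\<Sum>i<n. \<Sum>k<n. gM2 i k) = (\<Sum>i<n. \<Sum>k<n. gM2 k i)" by (rule sum.swap)
  have K: "(\<Sum>i<n. \<Sum>j<i. x i * y j) = (\<Sum>i<n. \<Sum>k<n. gK i k)" unfolding lt_full gK_def ..
  have pw: "gT i k + 2 * gG i k = gK i k + gM1 i k + gM2 k i" if "i < n" "k < n" for i k
  proof -
    have q: "i \<noteq> k \<Longrightarrow> p i \<noteq> p k" using perm_inj[OF P] that by blast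
    have c: "y k * x i = x i * y k" by simp
    show ?thesis unfolding gT_def gG_def gK_def gM1_def gM2_def c using q
      by (cases "i < k"; cases "k < i"; cases "p i < p k") auto
  qed
  have "(\<Sum>i<n. \<Sum>k<n. gT i k) + 2 * (\<Sum>i<n. \<Sum>k<n. gG i k)
      = (\<Sum>i<n. \<Sum>k<n. gK i k) + (\<Sum>i<n. \<Sum>k<n. gM1 i k) + (\<Sum>i<n. \<Sum>k<n. gM2 k i)"
  proof -
    have "(\<Sum>i<n. \<Sum>k<n. gT i k + 2 * gG i k) = (\<Sum>i<n. \<Sum>k<n. gK i k + gM1 i k + gM2 k i)"
      by (intro sum.cong refl pw) auto
    thus ?thesis by (simp add: sum.distrib sum_distrib_left)
  qed
  moreover have "Eexp n p (\<lambda>i. x i + y i) = Eexp n p x + Eexp n p y + (\<Sum>i<n. \<Sum>k<n. gM1 i k) + (\<Sum>i<n. \<Sum>k<n. gM2 i k)"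
    by (subst E) (simp add: Eexp_def g1_def g2_def sum.distrib)
  ultimately show ?thesis using T K M2 unfolding gG_def by simp
qed

lemma mult_sign:
  assumes P: "perm n p p'"
  shows "tw n a b * (-1) ^ Eexp n p (cmp n a p) * (-1) ^ Eexp n p (cmp n b p)
       = ((-1::'k::field) ^ Eexp n p (\<lambda>i. cmp n a p i + cmp n b p i)) * tw n (cmp n a p) (cmp n b p)"
proof -
  have "(-1::'k) ^ ((\<Sum>i<n. \<Sum>j<i. a i * b j) + Eexp n p (cmp n a p) + Eexp n p (cmp n b p)
     + 2 * (\<Sum>i<n. \<Sum>k<n. if k < i \<and> p i < p k then cmp n a p i * cmp n b p k else 0))
     = (-1) ^ (Eexp n p (\<lambda>i. cmp n a p i + cmp n b p i) + (\<Sum>i<n. \<Sum>j<i. cmp n a p i * cmp n b p j))"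
    by (subst mult_sign_nat[OF P]) (rule refl)
  thus ?thesis unfolding tw_def by (simp add: power_add power_mult)
qed



definition Sc :: "nat \<Rightarrow> (nat \<Rightarrow> nat) \<Rightarrow> (nat \<Rightarrow> nat) set" where
  "Sc n c = {a \<in> mons n. \<forall>i. a i \<le> c i}"

lemma amult_Sc: "amult n f g = (\<lambda>c. if c \<in> mons n then
      (\<Sum>a\<in>Sc n c. tw n a (\<lambda>i. c i - a i) * f a * g (\<lambda>i. c i - a i)) else 0)"
  unfolding amult_def Sc_def ..

lemma Sc_bij:
  assumes P: "perm n p q" and c: "c \<in> mons n"
  shows "bij_betw (\<lambda>a. cmp n a p) (Sc n c) (Sc n (cmp n c p))"
proof (rule bij_betw_byWitness[where f' = "\<lambda>a. cmp n a q"])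
  have pn: "\<forall>i<n. p i < n" and qn: "\<forall>i<n. q i < n" using P by (auto simp: perm_def)
  show "\<forall>a\<in>Sc n c. cmp n (cmp n a p) q = a"
    using P by (auto simp: cmp_cmp[OF qn] Sc_def perm_def intro!: cmp_id)
  show "\<forall>a\<in>Sc n (cmp n c p). cmp n (cmp n a q) p = a"
    using P by (auto simp: cmp_cmp[OF pn] Sc_def perm_def intro!: cmp_id)
  show "(\<lambda>a. cmp n a p) ` Sc n c \<subseteq> Sc n (cmp n c p)"
    by (auto simp: Sc_def cmp_def mons_def)
  show "(\<lambda>a. cmp n a q) ` Sc n (cmp n c p) \<subseteq> Sc n c"
  proof
    fix a' assume "a' \<in> (\<lambda>a. cmp n a q) ` Sc n (cmp n c p)"
    then obtain a where a: "a \<in> Sc n (cmp n c p)" and a': "a' = cmp n a q" by auto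
    have "a' i \<le> c i" for i
    proof (cases "i < n")
      case True
      have qi: "q i < n" "p (q i) = i" using P True by (auto simp: perm_def)
      have "a (q i) \<le> cmp n c p (q i)" using a by (simp add: Sc_def)
      hence "a (q i) \<le> c (p (q i))" using qi by (simp add: cmp_def)
      with True P a' show ?thesis by (auto simp: cmp_def perm_def)
    next
      case False thus ?thesis using a' by (simp add: cmp_def)
    qed
    thus "a' \<in> Sc n c" by (simp add: Sc_def a')
  qed
qed

lemma Pp_amult:
  assumes P: "perm n p q"
  shows "Pp n p (amult n f g) = amult n (Pp n p f) (Pp n p (g :: _ \<Rightarrow> 'k::field))"
proof (rule ext)
  fix c
  show "Pp n p (amult n f g) c = amult n (Pp n p f) (Pp n p g) c"
  proof (cases "c \<in> mons n")
    case False thus ?thesis by (simp add: Pp_def amult_Sc)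
  next
    case c: True
    define c' where "c' = cmp n c p"
    have sub: "cmp n (\<lambda>i. c i - a i) p = (\<lambda>i. c' i - cmp n a p i)" for a
      by (auto simp: cmp_def c'_def)
    have add: "(\<lambda>i. cmp n a p i + cmp n (\<lambda>i. c i - a i) p i) = c'" if "a \<in> Sc n c" for a
      using that by (auto simp: cmp_def c'_def Sc_def)
    have dm: "(\<lambda>i. c i - a i) \<in> mons n" for a using c by (simp add: mons_def)
    have "Pp n p (amult n f g) c = (-1) ^ Eexp n p c' *
        (\<Sum>a\<in>Sc n c'. tw n a (\<lambda>i. c' i - a i) * f a * g (\<lambda>i. c' i - a i))"
      using c by (simp add: Pp_def amult_Sc c'_def)
    also have "\<dots> = (-1) ^ Eexp n p c' *
        (\<Sum>a\<in>Sc n c. tw n (cmp n a p) (\<lambda>i. c' i - cmp n a p i) * f (cmp n a p) * g (\<lambda>i. c' i - cmp n a p i))"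
      using sum.reindex_bij_betw[OF Sc_bij[OF P c], of "\<lambda>a. tw n a (\<lambda>i. c' i - a i) * f a * g (\<lambda>i. c' i - a i)"]
      by (simp add: c'_def)
    also have "\<dots> = (\<Sum>a\<in>Sc n c. tw n a (\<lambda>i. c i - a i) * Pp n p f a * Pp n p g (\<lambda>i. c i - a i))"
      unfolding sum_distrib_left
    proof (intro sum.cong refl)
      fix a assume a: "a \<in> Sc n c"
      have am: "a \<in> mons n" using a by (simp add: Sc_def)
      have ms: "tw n a (\<lambda>i. c i - a i) * (-1) ^ Eexp n p (cmp n a p) * (-1) ^ Eexp n p (cmp n (\<lambda>i. c i - a i) p)
          = (-1::'k) ^ Eexp n p c' * tw n (cmp n a p) (cmp n (\<lambda>i. c i - a i) p)"
        using mult_sign[OF P, of a "\<lambda>i. c i - a i", where 'k='k] add[OF a] by simp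
      show "(-1) ^ Eexp n p c' * (tw n (cmp n a p) (\<lambda>i. c' i - cmp n a p i) * f (cmp n a p) * g (\<lambda>i. c' i - cmp n a p i))
          = tw n a (\<lambda>i. c i - a i) * Pp n p f a * Pp n p g (\<lambda>i. c i - a i)"
        using am dm[of a] ms unfolding Pp_def sub[symmetric]
        by (simp add: algebra_simps)
    qed
    also have "\<dots> = amult n (Pp n p f) (Pp n p g) c"
      using c by (simp add: amult_Sc)
    finally show ?thesis .
  qed
qed



lemma Pp_add: "Pp n p (f + g) = Pp n p f + Pp n p g"
  by (auto simp: Pp_def algebra_simps)

lemma Pp_zero: "Pp n p 0 = 0"
  by (auto simp: Pp_def)

lemma Pp_smul: "Pp n p (\<lambda>m. c * f m) = (\<lambda>m. c * Pp n p f m)"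
  by (auto simp: Pp_def algebra_simps)

lemma Pp_smulA: "Pp n p (smulA c f) = smulA c (Pp n p f)"
  unfolding smulA_def by (rule Pp_smul)

lemma Pp_sum_list: "Pp n p (sum_list xs) = sum_list (map (Pp n p) xs)"
  by (induction xs) (simp_all only: sum_list.Nil sum_list.Cons list.map Pp_zero Pp_add)

lemma Pp_sum: "Pp n p (sum F S) = (\<Sum>s\<in>S. Pp n p (F s))"
proof (cases "finite S")
  case True thus ?thesis
  proof (induction S rule: finite_induct)
    case empty show ?case by (simp only: sum.empty Pp_zero)
  next
    case (insert x S)
    show ?case by (simp only: sum.insert[OF insert.hyps] Pp_add insert.IH)
  qed
next
  case False thus ?thesis by (simp add: Pp_zero)
qed

lemma Pp_vanish: "c \<notin> mons n \<Longrightarrow> Pp n p f c = 0" by (simp add: Pp_def)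

lemma cmp_inv: "perm n p q \<Longrightarrow> c \<in> mons n \<Longrightarrow> cmp n (cmp n c p) q = c"
  by (subst cmp_cmp) (auto simp: perm_def intro!: cmp_id)

lemma Pp_Aset:
  assumes P: "perm n p q" and f: "f \<in> Aset n"
  shows "Pp n p f \<in> Aset n"
proof -
  have "{c. Pp n p f c \<noteq> 0} \<subseteq> (\<lambda>a. cmp n a q) ` {a. f a \<noteq> 0}"
  proof
    fix c assume "c \<in> {c. Pp n p f c \<noteq> 0}"
    hence c: "c \<in> mons n" "f (cmp n c p) \<noteq> 0" by (auto simp: Pp_def split: if_splits)
    have "c = cmp n (cmp n c p) q" using cmp_inv[OF P c(1)] by simp
    thus "c \<in> (\<lambda>a. cmp n a q) ` {a. f a \<noteq> 0}" using c(2) by blast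
  qed
  moreover have "finite {a. f a \<noteq> 0}" using f by (simp add: Aset_def)
  ultimately have "finite {c. Pp n p f c \<noteq> 0}" by (meson finite_imageI finite_subset)
  moreover have "\<forall>c. Pp n p f c \<noteq> 0 \<longrightarrow> c \<in> mons n" by (auto simp: Pp_def)
  ultimately show ?thesis by (simp add: Aset_def)
qed

lemma mdeg_cmp: "perm n p q \<Longrightarrow> mdeg n (cmp n c p) = mdeg n c"
  unfolding mdeg_def cmp_def using sum.reindex_bij_betw[OF perm_bij, of n p q c] by simp

lemma Pp_homog: "perm n p q \<Longrightarrow> homog n d f \<Longrightarrow> homog n d (Pp n p f)"
  unfolding homog_def Pp_def by (auto simp: mdeg_cmp split: if_splits)

lemma perm_sh: "n \<ge> 1 \<Longrightarrow> perm n (\<lambda>i. (i + k) mod n) (\<lambda>i. (i + (n - k mod n)) mod n)"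
  unfolding perm_def
proof (intro allI impI conjI)
  fix i assume n: "n \<ge> 1" and i: "i < n"
  show "(i + k) mod n < n" "(i + (n - k mod n)) mod n < n" using n by auto
  have km1: "k mod n < n" using n by simp
  have km2: "n * (k div n) + k mod n = k" by simp
  have key: "k + (n - k mod n) = n * (k div n) + n" using km1 km2 by linarith
  have e1: "i + (n - k mod n) + k = i + n * Suc (k div n)" using key by simp
  have e2: "i + k + (n - k mod n) = i + n * Suc (k div n)" using key by simp
  have "((i + (n - k mod n)) mod n + k) mod n = (i + n * Suc (k div n)) mod n"
    by (simp only: mod_add_left_eq e1)
  also have "\<dots> = i" using i by (simp only: mod_mult_self2 mod_less)
  finally show "((i + (n - k mod n)) mod n + k) mod n = i" .
  have "((i + k) mod n + (n - k mod n)) mod n = (i + n * Suc (k div n)) mod n"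
    by (simp only: mod_add_left_eq e2)
  also have "\<dots> = i" using i by (simp only: mod_mult_self2 mod_less)
  finally show "((i + k) mod n + (n - k mod n)) mod n = i" .
qed

lemma sgn_shift_Eexp:
  assumes n: "n \<ge> 1"
  shows "sgn_shift n a = (-1) ^ Eexp n (\<lambda>i. (i + 1) mod n) a"
proof -
  have cond: "(i < k \<and> Suc k mod n < Suc i mod n) = (k = n - 1 \<and> i < n - 1)"
    if "i < n" "k < n" for i k
  proof (cases "k + 1 < n")
    case True thus ?thesis using that by auto
  next
    case False
    hence "k = n - 1" using that by simp
    thus ?thesis using that n by (cases "i + 1 < n") auto
  qed
  have "Eexp n (\<lambda>i. (i + 1) mod n) a = (\<Sum>i<n. \<Sum>k<n. if k = n - 1 \<and> i < n - 1 then a i * a k else 0)"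
    unfolding Eexp_def by (intro sum.cong refl) (simp add: cond)
  also have "\<dots> = (\<Sum>i<n. if i < n - 1 then a i * a (n - 1) else 0)"
    using n by (intro sum.cong refl) (auto simp: if_distrib sum.delta cong: if_cong)
  also have "\<dots> = (\<Sum>i<n - 1. a i * a (n - 1))"
  proof -
    have e: "{..<n - 1} = {i\<in>{..<n}. i < n - 1}" by auto
    show ?thesis using sum.inter_filter[of "{..<n}" "\<lambda>i. a i * a (n - 1)" "\<lambda>i. i < n - 1"] e by simp
  qed
  also have "\<dots> = a (n - 1) * (\<Sum>i<n - 1. a i)" by (simp add: sum_distrib_left mult.commute)
  finally show ?thesis unfolding sgn_shift_def by simp
qed

lemma unshift_cmp: "unshift n c = cmp n c (\<lambda>i. (i + 1) mod n)"
  by (rule ext) (simp add: unshift_def cmp_def)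

lemma asigma_Pp: "n \<ge> 1 \<Longrightarrow> asigma n f = Pp n (\<lambda>i. (i + 1) mod n) f"
  unfolding asigma_def Pp_def unshift_cmp by (simp only: sgn_shift_Eexp)

lemma asig_pow_Pp:
  assumes n: "n \<ge> 1" and Q: "perm n q q'"
  shows "(asigma n ^^ k) (Pp n q f) = Pp n (\<lambda>i. (q i + k) mod n) f"
proof (induction k)
  case 0
  have "\<forall>i<n. q i = (q i + 0) mod n" using Q by (simp add: perm_def)
  from fun_cong[OF Pp_cong[OF this], of f] show ?case by simp
next
  case (Suc k)
  have Pk: "perm n (\<lambda>i. (q i + k) mod n) (\<lambda>i. q' ((i + (n - k mod n)) mod n))"
    using perm_comp[OF perm_sh[OF n] Q] .
  have P1: "perm n (\<lambda>i. (i + 1) mod n) (\<lambda>i. (i + (n - 1 mod n)) mod n)" using perm_sh[OF n] .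
  have "(asigma n ^^ Suc k) (Pp n q f) = asigma n ((asigma n ^^ k) (Pp n q f))" by simp
  also have "\<dots> = asigma n (Pp n (\<lambda>i. (q i + k) mod n) f)" by (simp only: Suc.IH)
  also have "\<dots> = Pp n (\<lambda>i. (i + 1) mod n) (Pp n (\<lambda>i. (q i + k) mod n) f)"
    by (rule asigma_Pp[OF n])
  also have "\<dots> = Pp n (\<lambda>i. ((q i + k) mod n + 1) mod n) f" by (rule Pp_comp[OF P1 Pk])
  also have "\<dots> = Pp n (\<lambda>i. (q i + Suc k) mod n) f"
  proof -
    have "\<forall>i<n. ((q i + k) mod n + 1) mod n = (q i + Suc k) mod n" by (simp add: mod_Suc_eq)
    from fun_cong[OF Pp_cong[OF this], of f] show ?thesis .
  qed
  finally show ?case .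
qed

lemma Pp_asig_pow:
  assumes n: "n \<ge> 1" and P: "perm n p p'"
  shows "Pp n p ((asigma n ^^ k) f) = Pp n (\<lambda>i. p ((i + k) mod n)) f"
proof (cases k)
  case 0
  have "\<forall>i<n. p i = p ((i + 0) mod n)" by simp
  from fun_cong[OF Pp_cong[OF this], of f] show ?thesis using 0 by simp
next
  case (Suc k')
  have P1: "perm n (\<lambda>i. (i + 1) mod n) (\<lambda>i. (i + (n - 1 mod n)) mod n)" using perm_sh[OF n] .
  have Pk: "perm n (\<lambda>i. ((i + 1) mod n + k') mod n) (\<lambda>i. ((i + (n - k' mod n)) mod n + (n - 1 mod n)) mod n)"
    using perm_comp[OF perm_sh[OF n] P1] .
  have "(asigma n ^^ k) f = (asigma n ^^ k') (asigma n f)" using Suc by (simp only: funpow_Suc_right o_apply)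
  also have "\<dots> = Pp n (\<lambda>i. ((i + 1) mod n + k') mod n) f"
    by (simp only: asigma_Pp[OF n] asig_pow_Pp[OF n P1])
  finally have "Pp n p ((asigma n ^^ k) f) = Pp n (\<lambda>i. p (((i + 1) mod n + k') mod n)) f"
    using Pp_comp[OF P Pk] by simp
  also have "\<dots> = Pp n (\<lambda>i. p ((i + k) mod n)) f"
    using Suc by (intro arg_cong[where f="\<lambda>p. Pp n p f"] Pp_cong) (simp add: mod_add_left_eq)
  finally show ?thesis .
qed



lemma mod_shift: "X + n * c = Y + n * d \<Longrightarrow> X mod n = Y mod (n::nat)"
  by (metis mod_mult_self2)

lemma modA:
  assumes lm: "(l * m) mod n = (1::nat)"
  shows "(m * ((l * i) mod n)) mod n = i mod n"
proof -
  obtain t where t: "l * m = n * t + 1" using lm div_mult_mod_eq[of "l*m" n] by (metis add.commute mult.commute)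
  have e: "(l * i) mod n + n * ((l * i) div n) = l * i" by simp
  have "m * ((l * i) mod n) + n * (m * ((l * i) div n)) = m * ((l * i) mod n + n * ((l * i) div n))"
    by (simp only: distrib_left mult.left_commute)
  also have "\<dots> = m * (l * i)" by (subst e) (rule refl)
  also have "\<dots> = (l * m) * i" by (simp add: algebra_simps)
  also have "\<dots> = i + n * (t * i)" by (simp add: t algebra_simps)
  finally show ?thesis by (rule mod_shift)
qed

lemma modA': "(l * m) mod n = (1::nat) \<Longrightarrow> i < n \<Longrightarrow> (m * ((l * i) mod n)) mod n = i"
  using modA[of l m n i] by simp

lemma modB:
  assumes lm: "(l * m) mod n = (1::nat)"
  shows "(m * ((i + (l * h) mod n) mod n)) mod n = ((m * i) mod n + h) mod n"
proof -
  have "(m * ((i + (l * h) mod n) mod n)) mod n = (m * i + m * ((l * h) mod n)) mod n"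
    by (simp add: mod_mult_right_eq algebra_simps)
  also have "\<dots> = (m * i + (m * ((l * h) mod n)) mod n) mod n" by (simp add: mod_add_right_eq)
  also have "\<dots> = (m * i + h mod n) mod n" by (simp only: modA[OF lm])
  also have "\<dots> = ((m * i) mod n + h) mod n" by (simp add: mod_add_right_eq mod_add_left_eq)
  finally show ?thesis .
qed

lemma modB1:
  assumes lm: "(l * m) mod n = (1::nat)"
  shows "((m * i) mod n + 1) mod n = (m * ((i + l) mod n)) mod n"
proof -
  have "(m * ((i + l) mod n)) mod n = (m * i + (m * l) mod n) mod n"
    by (simp add: mod_mult_right_eq mod_add_right_eq algebra_simps)
  also have "\<dots> = (m * i + 1) mod n" using lm by (simp add: mult.commute)
  finally show ?thesis by (simp add: mod_Suc_eq)
qed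

lemma modD:
  assumes "k < n" "h < (n::nat)"
  shows "((l * k) mod n + n - (l * h) mod n) mod n = (l * ((k + n - h) mod n)) mod n"
proof -
  define B where "B = (l * h) mod n"
  define Q where "Q = (l * h) div n"
  have B: "B < n" using assms by (simp add: B_def)
  have BQ: "B + n * Q = l * h" by (simp add: B_def Q_def)
  have lnh: "l * (n - h) + l * h = l * n" using assms by (simp add: diff_mult_distrib2)
  have neg: "(n - B) mod n = (l * (n - h)) mod n"
  proof (rule mod_shift[where c = l and d = "1 + Q"])
    show "n - B + n * l = l * (n - h) + n * (1 + Q)"
      using B BQ lnh by (simp add: algebra_simps)
  qed
  have "((l * k) mod n + n - B) mod n = ((l * k) mod n + (n - B)) mod n" using B by simp
  also have "\<dots> = (l * k + (n - B)) mod n" by (simp add: mod_add_left_eq)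
  also have "\<dots> = (l * k + l * (n - h)) mod n" by (metis mod_add_right_eq neg)
  also have "\<dots> = (l * (k + n - h)) mod n" using assms by (simp add: algebra_simps)
  also have "\<dots> = (l * ((k + n - h) mod n)) mod n" by (simp add: mod_mult_right_eq)
  finally show ?thesis by (simp add: B_def)
qed

lemma pow_mod: "(x::'a::monoid_mult) ^ n = 1 \<Longrightarrow> x ^ a = x ^ (a mod n)"
proof -
  assume x: "x ^ n = 1"
  have "x ^ a = x ^ (n * (a div n) + a mod n)" by simp
  also have "\<dots> = x ^ (a mod n)" by (simp only: power_add power_mult x power_one mult_1_left)
  finally show ?thesis .
qed

lemma pow_mod_eq: "(x::'a::monoid_mult) ^ n = 1 \<Longrightarrow> a mod n = b mod n \<Longrightarrow> x ^ a = x ^ b"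
  by (metis pow_mod)

lemma perm_mul:
  assumes "(l * m) mod n = (1::nat)" "n \<ge> 1"
  shows "perm n (\<lambda>i. (m * i) mod n) (\<lambda>i. (l * i) mod n)"
  unfolding perm_def using assms modA'[of l m n] modA'[of m l n] by (auto simp: mult.commute)



lemma Pp_zero'[simp]: "Pp n p (\<lambda>a. 0) = (\<lambda>a. 0)"
  by (auto simp: Pp_def)

lemma Pp_add'[simp]: "Pp n p (\<lambda>x. f x + g x) = (\<lambda>x. Pp n p f x + Pp n p g x)"
  by (auto simp: Pp_def algebra_simps)

lemma asigma_smul: "asigma n (\<lambda>m. c * f m) = (\<lambda>m. c * asigma n f m)"
  by (auto simp: asigma_def algebra_simps)

lemma asig_pow_eig:
  assumes e: "asigma n f = (\<lambda>m. c * f m)"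
  shows "(asigma n ^^ k) f = (\<lambda>m. c ^ k * f m)"
proof (induction k)
  case 0 show ?case by simp
next
  case (Suc k)
  have "(asigma n ^^ Suc k) f = asigma n ((asigma n ^^ k) f)" by simp
  also have "\<dots> = asigma n (\<lambda>m. c ^ k * f m)" by (simp only: Suc.IH)
  also have "\<dots> = (\<lambda>m. c ^ k * asigma n f m)" by (rule asigma_smul)
  also have "\<dots> = (\<lambda>m. c ^ Suc k * f m)" by (simp add: e ac_simps)
  finally show ?case .
qed

lemma Rj_map:
  assumes n: "n \<ge> 1" and P: "perm n p p'"
    and comm: "\<forall>i<n. (p i + 1) mod n = p ((i + l) mod n)"
    and r: "r \<in> Rj n \<omega> j"
  shows "Pp n p r \<in> Rj n \<omega> (l * j)"
proof -
  define c where "c = inverse \<omega> ^ j"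
  have rA: "r \<in> Aset n" and re: "asigma n r = (\<lambda>m. c * r m)" using r by (auto simp: Rj_def c_def)
  have "asigma n (Pp n p r) = (asigma n ^^ 1) (Pp n p r)" by simp
  also have "\<dots> = Pp n (\<lambda>i. (p i + 1) mod n) r" by (rule asig_pow_Pp[OF n P])
  also have "\<dots> = Pp n (\<lambda>i. p ((i + l) mod n)) r" using fun_cong[OF Pp_cong[OF comm], of r] .
  also have "\<dots> = Pp n p ((asigma n ^^ l) r)" by (rule Pp_asig_pow[OF n P, symmetric])
  also have "\<dots> = (\<lambda>m. c ^ l * Pp n p r m)" by (simp add: asig_pow_eig[OF re] Pp_smul)
  also have "c ^ l = inverse \<omega> ^ (l * j)" by (simp add: c_def power_mult[symmetric] mult.commute)
  finally show ?thesis using Pp_Aset[OF P rA] by (simp add: Rj_def)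
qed

lemma Pp_RjA_list: "perm n p p' \<Longrightarrow> Pp n p (sum_list (map (\<lambda>(r, a). amult n r a) ps))
   = sum_list (map (\<lambda>(r, a). amult n r a) (map (\<lambda>(r, a). (Pp n p r, Pp n p a)) ps))"
  by (induction ps) (simp_all add: Pp_zero Pp_add Pp_amult split_def)

lemma RjA_map:
  assumes n: "n \<ge> 1" and P: "perm n p p'"
    and comm: "\<forall>i<n. (p i + 1) mod n = p ((i + l) mod n)"
    and x: "x \<in> RjA n \<omega> j"
  shows "Pp n p x \<in> RjA n \<omega> (l * j)"
proof -
  obtain ps where x: "x = sum_list (map (\<lambda>(r, a). amult n r a) ps)" and ps: "set ps \<subseteq> Rj n \<omega> j \<times> Aset n"
    using x by (auto simp: RjA_def)
  have "set (map (\<lambda>(r, a). (Pp n p r, Pp n p a)) ps) \<subseteq> Rj n \<omega> (l * j) \<times> Aset n"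
    using ps by (fastforce intro: Rj_map[OF n P comm] Pp_Aset[OF P])
  thus ?thesis unfolding RjA_def x Pp_RjA_list[OF P] by blast
qed

lemma inv_pow_n: "(\<omega>::'k::field) ^ n = 1 \<Longrightarrow> inverse \<omega> ^ n = 1"
  by (simp add: power_inverse)

lemma Rj_mod: "(\<omega>::'k::field) ^ n = 1 \<Longrightarrow> a mod n = b mod n \<Longrightarrow> Rj n \<omega> a = Rj n \<omega> b"
proof -
  assume w: "\<omega> ^ n = 1" and ab: "a mod n = b mod n"
  have "inverse \<omega> ^ a = inverse \<omega> ^ b" by (rule pow_mod_eq[OF inv_pow_n[OF w] ab])
  thus ?thesis by (simp add: Rj_def)
qed

lemma RjA_mod: "(\<omega>::'k::field) ^ n = 1 \<Longrightarrow> a mod n = b mod n \<Longrightarrow> RjA n \<omega> a = RjA n \<omega> b"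
proof -
  assume w: "\<omega> ^ n = 1" and ab: "a mod n = b mod n"
  have e: "Rj n \<omega> a = Rj n \<omega> b" by (rule Rj_mod[OF w ab])
  show ?thesis unfolding RjA_def e ..
qed

lemma mod_inv_j: "(l * m) mod n = (1::nat) \<Longrightarrow> (m * (l * j)) mod n = j mod n"
proof -
  assume lm: "(l * m) mod n = 1"
  have "(m * (l * j)) mod n = ((l * m) * j) mod n" by (simp add: algebra_simps)
  also have "\<dots> = ((l * m) mod n * j) mod n" by (simp only: mod_mult_left_eq)
  finally have "(m * (l * j)) mod n = ((l * m) mod n * j) mod n" .
  thus ?thesis using lm by simp
qed

lemma part1:
  fixes \<omega> :: "'k::field"
  assumes n: "n \<ge> 1" and w: "\<omega> ^ n = 1" and lm: "(l * m) mod n = 1"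
  shows "graded_quot_iso (homog n) smulA (Aset n) (RjA n \<omega> j) (Aset n) (RjA n \<omega> (l * j))"
proof -
  have ml: "(m * l) mod n = 1" using lm by (simp add: mult.commute)
  define p where "p = (\<lambda>i. (m * i) mod n)"
  define q where "q = (\<lambda>i. (l * i) mod n)"
  have P: "perm n p q" unfolding p_def q_def by (rule perm_mul[OF lm n])
  have Q: "perm n q p" by (rule perm_sym[OF P])
  have cp: "\<forall>i<n. (p i + 1) mod n = p ((i + l) mod n)" unfolding p_def using modB1[OF lm] by simp
  have cq: "\<forall>i<n. (q i + 1) mod n = q ((i + m) mod n)" unfolding q_def using modB1[OF ml] by simp
  have bck: "RjA n \<omega> (m * (l * j)) = RjA n \<omega> j" by (rule RjA_mod[OF w mod_inv_j[OF lm]])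
  have vanA: "\<forall>c. c \<notin> mons n \<longrightarrow> x c = 0" if "x \<in> Aset n" for x :: "_ \<Rightarrow> 'k"
    using that by (auto simp: Aset_def)
  show ?thesis unfolding graded_quot_iso_def
  proof (intro exI[of _ "Pp n p"] conjI ballI allI impI)
    fix x :: "_ \<Rightarrow> 'k" assume x: "x \<in> Aset n"
    show "Pp n p x \<in> Aset n" by (rule Pp_Aset[OF P x])
    fix d assume "homog n d x" thus "homog n d (Pp n p x)" by (rule Pp_homog[OF P])
  next
    fix x y :: "_ \<Rightarrow> 'k" show "Pp n p (x + y) = Pp n p x + Pp n p y" by (rule Pp_add)
  next
    fix c and x :: "_ \<Rightarrow> 'k" show "Pp n p (smulA c x) = smulA c (Pp n p x)" by (rule Pp_smulA)
  next
    fix x :: "_ \<Rightarrow> 'k" assume x: "x \<in> Aset n"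
    show "(Pp n p x \<in> RjA n \<omega> (l * j)) = (x \<in> RjA n \<omega> j)"
    proof
      assume "Pp n p x \<in> RjA n \<omega> (l * j)"
      from RjA_map[OF n Q cq this] have "Pp n q (Pp n p x) \<in> RjA n \<omega> j" using bck by simp
      thus "x \<in> RjA n \<omega> j" using Pp_inv[OF P vanA[OF x]] by simp
    next
      assume "x \<in> RjA n \<omega> j" thus "Pp n p x \<in> RjA n \<omega> (l * j)" by (rule RjA_map[OF n P cp])
    qed
  next
    fix y :: "_ \<Rightarrow> 'k" assume y: "y \<in> Aset n"
    have "Pp n p (Pp n q y) = y" by (rule Pp_inv[OF Q vanA[OF y]])
    moreover have "(0::_ \<Rightarrow> 'k) \<in> RjA n \<omega> (l * j)" unfolding RjA_def
      by (rule CollectI, rule exI[of _ "[]"]) simp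
    ultimately show "\<exists>x\<in>Aset n. y - Pp n p x \<in> RjA n \<omega> (l * j)"
      using Pp_Aset[OF Q y] by (intro bexI[of _ "Pp n q y"]) auto
  qed
qed



definition Phi :: "nat \<Rightarrow> nat \<Rightarrow> nat \<Rightarrow> (nat \<Rightarrow> (nat \<Rightarrow> nat) \<Rightarrow> 'k::field) \<Rightarrow> (nat \<Rightarrow> (nat \<Rightarrow> nat) \<Rightarrow> 'k)" where
  "Phi n l m u = (\<lambda>k. if k < n then Pp n (\<lambda>i. (m * i) mod n) (u ((l * k) mod n)) else 0)"

lemma fun_sum_apply: "(sum F S) x = (\<Sum>s\<in>S. F s x)"
  by (induction S rule: infinite_finite_induct) auto

lemma Phi_add: "Phi n l m (u + v) = Phi n l m u + Phi n l m v"
  by (auto simp: Phi_def Pp_add)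

lemma Phi_zero: "Phi n l m 0 = 0"
  by (auto simp: Phi_def Pp_zero)

lemma Phi_sum_list: "Phi n l m (sum_list xs) = sum_list (map (Phi n l m) xs)"
  by (induction xs) (simp_all only: sum_list.Nil sum_list.Cons list.map Phi_zero Phi_add)

lemma Phi_smulS: "Phi n l m (smulS c u) = smulS c (Phi n l m u)"
proof (intro ext)
  fix k x show "Phi n l m (smulS c u) k x = smulS c (Phi n l m u) k x"
    unfolding Phi_def smulS_def by (cases "k < n") (simp_all add: fun_cong[OF Pp_smul])
qed

lemma Phi_Sset:
  assumes P: "perm n (\<lambda>i. (m * i) mod n) q" and u: "u \<in> Sset n"
  shows "Phi n l m u \<in> Sset n"
proof -
  have "Phi n l m u g \<in> Aset n" for g
  proof (cases "g < n")
    case True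
    have "u ((l * g) mod n) \<in> Aset n" using u by (simp add: Sset_def)
    thus ?thesis using True Pp_Aset[OF P] by (simp add: Phi_def)
  next
    case False thus ?thesis by (simp add: Phi_def Aset_def)
  qed
  thus ?thesis by (simp add: Sset_def Phi_def)
qed

lemma Phi_homogS: "perm n (\<lambda>i. (m * i) mod n) q \<Longrightarrow> homogS n d u \<Longrightarrow> homogS n d (Phi n l m u)"
  by (auto simp: Phi_def homogS_def intro: Pp_homog) (auto simp: homog_def)

lemma Phi_inv:
  assumes n: "n \<ge> 1" and lm: "(l * m) mod n = 1"
    and u1: "\<forall>k c. c \<notin> mons n \<longrightarrow> u k c = 0" and u2: "\<forall>k\<ge>n. u k = 0"
  shows "Phi n m l (Phi n l m u) = u"
proof (rule ext)
  fix k
  have ml: "(m * l) mod n = 1" using lm by (simp add: mult.commute)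
  have P: "perm n (\<lambda>i. (m * i) mod n) (\<lambda>i. (l * i) mod n)" by (rule perm_mul[OF lm n])
  show "Phi n m l (Phi n l m u) k = u k"
  proof (cases "k < n")
    case True
    have mk: "(m * k) mod n < n" using n by simp
    have "(l * ((m * k) mod n)) mod n = k" using modA'[OF ml True] .
    thus ?thesis using True mk Pp_inv[OF P, of "u k"] u1 by (simp add: Phi_def)
  next
    case False thus ?thesis using u2 by (simp add: Phi_def)
  qed
qed

lemma Pp_oneA:
  assumes P: "perm n p q"
  shows "Pp n p oneA = oneA"
proof (rule ext)
  fix c
  have z: "(\<lambda>_. 0::nat) \<in> mons n" by (simp add: mons_def)
  show "Pp n p oneA c = oneA c"
  proof (cases "c \<in> mons n")
    case False
    hence "c \<noteq> (\<lambda>_. 0)" using z by auto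
    thus ?thesis using False by (simp add: Pp_def oneA_def)
  next
    case True
    have "cmp n c p = (\<lambda>_. 0) \<longleftrightarrow> c = (\<lambda>_. 0)"
    proof
      assume "cmp n c p = (\<lambda>_. 0)"
      hence "cmp n (cmp n c p) q = cmp n (\<lambda>_. 0) q" by simp
      thus "c = (\<lambda>_. 0)" using cmp_inv[OF P True] by (simp add: cmp_def)
    qed (simp add: cmp_def)
    moreover have "Eexp n p (\<lambda>_. 0) = 0" by (simp add: Eexp_def)
    ultimately show ?thesis using True by (auto simp: Pp_def oneA_def)
  qed
qed

lemma Phi_eidem:
  fixes \<omega> :: "'k::field"
  assumes n: "n \<ge> 1" and w: "\<omega> ^ n = 1" and lm: "(l * m) mod n = 1"
  shows "Phi n l m (eidem n \<omega> \<alpha>) = eidem n \<omega> (l * \<alpha>)"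
proof (rule ext)
  fix k
  have P: "perm n (\<lambda>i. (m * i) mod n) (\<lambda>i. (l * i) mod n)" by (rule perm_mul[OF lm n])
  show "Phi n l m (eidem n \<omega> \<alpha>) k = eidem n \<omega> (l * \<alpha>) k"
  proof (cases "k < n")
    case True
    have lk: "(l * k) mod n < n" using n by simp
    have e: "\<omega> ^ (\<alpha> * ((l * k) mod n)) = \<omega> ^ (l * \<alpha> * k)"
      by (rule pow_mod_eq[OF w]) (simp add: mod_mult_right_eq algebra_simps)
    define C where "C = 1 / of_nat n * \<omega> ^ (l * \<alpha> * k)"
    have e1: "eidem n \<omega> \<alpha> ((l * k) mod n) = (\<lambda>m. C * oneA m)"
      using lk unfolding eidem_def C_def e by simp
    have e2: "eidem n \<omega> (l * \<alpha>) k = (\<lambda>m. C * oneA m)"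
      using True unfolding eidem_def C_def by simp
    have "Phi n l m (eidem n \<omega> \<alpha>) k = Pp n (\<lambda>i. (m * i) mod n) (\<lambda>m. C * oneA m)"
      using True e1 by (simp add: Phi_def)
    also have "\<dots> = (\<lambda>m. C * oneA m)" by (simp only: Pp_smul Pp_oneA[OF P])
    finally show ?thesis using e2 by simp
  next
    case False thus ?thesis by (simp add: Phi_def eidem_def zero_fun_def)
  qed
qed

lemma Phi_smult:
  fixes u v :: "nat \<Rightarrow> (nat \<Rightarrow> nat) \<Rightarrow> 'k::field"
  assumes n: "n \<ge> 1" and lm: "(l * m) mod n = 1"
  shows "Phi n l m (smult n u v) = smult n (Phi n l m u) (Phi n l m v)"
proof (rule ext)
  fix k
  define p where "p = (\<lambda>i. (m * i) mod n)"
  define q where "q = (\<lambda>i. (l * i) mod n)"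
  have P: "perm n p q" unfolding p_def q_def by (rule perm_mul[OF lm n])
  have Q: "perm n q p" by (rule perm_sym[OF P])
  show "Phi n l m (smult n u v) k = smult n (Phi n l m u) (Phi n l m v) k"
  proof (cases "k < n")
    case False thus ?thesis by (simp add: Phi_def smult_def zero_fun_def)
  next
    case k: True
    define K where "K = q k"
    have K: "K < n" using n by (simp add: K_def q_def)
    define G where "G = (\<lambda>g. amult n (Pp n p (u g)) (Pp n (\<lambda>i. p ((i + g) mod n)) (v ((K + n - g) mod n))))"
    have "Phi n l m (smult n u v) k = Pp n p (\<Sum>g<n. amult n (u g) ((asigma n ^^ g) (v ((K + n - g) mod n))))"
      using k K by (simp add: Phi_def smult_def K_def p_def q_def)
    also have "\<dots> = (\<Sum>g<n. G g)"
      by (simp add: Pp_sum Pp_amult[OF P] Pp_asig_pow[OF n P] G_def)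
    also have "\<dots> = (\<Sum>h<n. G (q h))"
      by (rule sum.reindex_bij_betw[OF perm_bij[OF Q], symmetric])
    also have "\<dots> = (\<Sum>h<n. amult n (Phi n l m u h) ((asigma n ^^ h) (Phi n l m v ((k + n - h) mod n))))"
    proof (intro sum.cong refl)
      fix h assume h: "h \<in> {..<n}"
      have c1: "\<forall>i<n. p ((i + q h) mod n) = (p i + h) mod n"
        unfolding p_def q_def using modB[OF lm] by simp
      have c2: "(K + n - q h) mod n = q ((k + n - h) mod n)"
        unfolding K_def q_def using modD[OF k, of h l] h by simp
      have kh: "(k + n - h) mod n < n" using n by simp
      have hn: "h < n" using h by simp
      have PhiE: "\<And>w j. j < n \<Longrightarrow> Phi n l m w j = Pp n p (w (q j))"
        by (simp add: Phi_def p_def q_def)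
      show "G (q h) = amult n (Phi n l m u h) ((asigma n ^^ h) (Phi n l m v ((k + n - h) mod n)))"
        unfolding G_def PhiE[OF hn] PhiE[OF kh] asig_pow_Pp[OF n P] fun_cong[OF Pp_cong[OF c1]] c2 ..
    qed
    also have "\<dots> = smult n (Phi n l m u) (Phi n l m v) k" by (simp only: smult_def k if_True)
    finally show ?thesis .
  qed
qed



lemma smult_vanish:
  "c \<notin> mons n \<Longrightarrow> smult n a b k c = 0" "k \<ge> n \<Longrightarrow> smult n a b k = 0"
  by (auto simp: smult_def fun_sum_apply amult_def)

lemma Phi_Ie0:
  fixes \<omega> :: "'k::field"
  assumes n: "n \<ge> 1" and w: "\<omega> ^ n = 1" and lm: "(l * m) mod n = 1"
    and x: "x \<in> Ie0 n \<omega>"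
  shows "Phi n l m x \<in> Ie0 n \<omega>"
proof -
  have P: "perm n (\<lambda>i. (m * i) mod n) (\<lambda>i. (l * i) mod n)" by (rule perm_mul[OF lm n])
  define F where "F = (\<lambda>(u, v). smult n (smult n u (eidem n \<omega> 0)) v)"
  obtain ps where x: "x = sum_list (map F ps)" and ps: "set ps \<subseteq> Sset n \<times> Sset n"
    using x by (auto simp: Ie0_def F_def)
  have e0: "Phi n l m (eidem n \<omega> 0) = eidem n \<omega> 0"
    using Phi_eidem[OF n w lm, of 0] by simp
  have FP: "Phi n l m (F uv) = F ((\<lambda>(u, v). (Phi n l m u, Phi n l m v)) uv)" for uv
    by (cases uv) (simp add: F_def Phi_smult[OF n lm] e0)
  have "Phi n l m x = sum_list (map F (map (\<lambda>(u, v). (Phi n l m u, Phi n l m v)) ps))"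
    unfolding x Phi_sum_list map_map o_def FP ..
  moreover have "set (map (\<lambda>(u, v). (Phi n l m u, Phi n l m v)) ps) \<subseteq> Sset n \<times> Sset n"
    using ps Phi_Sset[OF P] by fastforce
  ultimately show ?thesis unfolding Ie0_def F_def by blast
qed

lemma part2:
  fixes \<omega> :: "'k::field"
  assumes n: "n \<ge> 1" and w: "\<omega> ^ n = 1" and lm: "(l * m) mod n = 1"
  shows "graded_quot_iso (homogS n) smulS (eS n \<omega> j) (Ie0 n \<omega>) (eS n \<omega> (l * j)) (Ie0 n \<omega>)"
proof -
  have ml: "(m * l) mod n = 1" using lm by (simp add: mult.commute)
  have P: "perm n (\<lambda>i. (m * i) mod n) (\<lambda>i. (l * i) mod n)" by (rule perm_mul[OF lm n])
  have Q: "perm n (\<lambda>i. (l * i) mod n) (\<lambda>i. (m * i) mod n)" by (rule perm_mul[OF ml n])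
  show ?thesis unfolding graded_quot_iso_def
  proof (intro exI[of _ "Phi n l m"] conjI ballI allI impI)
    fix x :: "nat \<Rightarrow> _ \<Rightarrow> 'k" assume x: "x \<in> eS n \<omega> j"
    then obtain u where u: "u \<in> Sset n" and xu: "x = smult n (eidem n \<omega> j) u" by (auto simp: eS_def)
    show "Phi n l m x \<in> eS n \<omega> (l * j)"
      unfolding xu Phi_smult[OF n lm] Phi_eidem[OF n w lm] eS_def using Phi_Sset[OF P u] by blast
    fix d assume "homogS n d x" thus "homogS n d (Phi n l m x)" by (rule Phi_homogS[OF P])
  next
    fix x y :: "nat \<Rightarrow> _ \<Rightarrow> 'k" show "Phi n l m (x + y) = Phi n l m x + Phi n l m y" by (rule Phi_add)
  next
    fix c and x :: "nat \<Rightarrow> _ \<Rightarrow> 'k" show "Phi n l m (smulS c x) = smulS c (Phi n l m x)" by (rule Phi_smulS)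
  next
    fix x :: "nat \<Rightarrow> _ \<Rightarrow> 'k" assume x: "x \<in> eS n \<omega> j"
    then obtain u where xu: "x = smult n (eidem n \<omega> j) u" by (auto simp: eS_def)
    have inv: "Phi n m l (Phi n l m x) = x"
      by (rule Phi_inv[OF n lm]) (simp_all add: xu smult_vanish)
    show "(Phi n l m x \<in> Ie0 n \<omega>) = (x \<in> Ie0 n \<omega>)"
    proof
      assume "Phi n l m x \<in> Ie0 n \<omega>"
      from Phi_Ie0[OF n w ml this] show "x \<in> Ie0 n \<omega>" using inv by simp
    next
      assume "x \<in> Ie0 n \<omega>" thus "Phi n l m x \<in> Ie0 n \<omega>" by (rule Phi_Ie0[OF n w lm])
    qed
  next
    fix y :: "nat \<Rightarrow> _ \<Rightarrow> 'k" assume y: "y \<in> eS n \<omega> (l * j)"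
    then obtain v where v: "v \<in> Sset n" and yv: "y = smult n (eidem n \<omega> (l * j)) v" by (auto simp: eS_def)
    define x where "x = smult n (eidem n \<omega> j) (Phi n m l v)"
    have xe: "x \<in> eS n \<omega> j" unfolding x_def eS_def using Phi_Sset[OF Q v] by blast
    have vinv: "Phi n l m (Phi n m l v) = v"
      by (rule Phi_inv[OF n ml]) (use v in \<open>auto simp: Sset_def Aset_def\<close>)
    have "Phi n l m x = y" unfolding x_def yv Phi_smult[OF n lm] Phi_eidem[OF n w lm] vinv ..
    moreover have "(0 :: nat \<Rightarrow> _ \<Rightarrow> 'k) \<in> Ie0 n \<omega>" unfolding Ie0_def
      by (rule CollectI, rule exI[of _ "[]"]) simp
    ultimately show "\<exists>x\<in>eS n \<omega> j. y - Phi n l m x \<in> Ie0 n \<omega>" using xe by (intro bexI[of _ x]) simp_all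
  qed
qed

theorem lemma3p4:
  fixes \<omega> :: "'k::field_char_0" and n lam j :: nat
  assumes "alg_closed TYPE('k)"
    and "n \<ge> 2"
    and "\<omega> ^ n = 1" and "\<forall>m. 0 < m \<and> m < n \<longrightarrow> \<omega> ^ m \<noteq> 1"
    and "lam > 0" and "gcd lam n = 1"
    and "1 \<le> j" and "j \<le> n - 1"
  shows "graded_quot_iso (homog n) smulA (Aset n) (RjA n \<omega> j) (Aset n) (RjA n \<omega> (lam * j))
       \<and> graded_quot_iso (homogS n) smulS (eS n \<omega> j) (Ie0 n \<omega>) (eS n \<omega> (lam * j)) (Ie0 n \<omega>)
       \<and> (prime n \<longrightarrow> (\<forall>i. 2 \<le> i \<and> i \<le> n - 1 \<longrightarrow>
            graded_quot_iso (homogS n) smulS (eS n \<omega> 1) (Ie0 n \<omega>) (eS n \<omega> i) (Ie0 n \<omega>)))"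
proof -
  have n1: "n \<ge> 1" and n2: "n \<ge> 2" using assms(2) by auto
  have w: "\<omega> ^ n = 1" by fact
  have inverse_ex: "\<exists>m. (l * m) mod n = 1" if l0: "l > 0" and gl: "gcd l n = 1" for l
  proof -
    obtain x y where "l * x = n * y + gcd l n" using bezout_nat[of l n] l0 by auto
    hence "l * x = 1 + n * y" using gl by simp
    hence "(l * x) mod n = 1 mod n" by (simp only: mod_mult_self2)
    hence "(l * x) mod n = 1" using n2 by simp
    thus ?thesis by blast
  qed
  from inverse_ex[OF assms(5) assms(6)] obtain m where lm: "(lam * m) mod n = 1" ..
  have A: "graded_quot_iso (homog n) smulA (Aset n) (RjA n \<omega> j) (Aset n) (RjA n \<omega> (lam * j))"
    by (rule part1[OF n1 w lm])
  have B: "graded_quot_iso (homogS n) smulS (eS n \<omega> j) (Ie0 n \<omega>) (eS n \<omega> (lam * j)) (Ie0 n \<omega>)"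
    by (rule part2[OF n1 w lm])
  have C: "graded_quot_iso (homogS n) smulS (eS n \<omega> 1) (Ie0 n \<omega>) (eS n \<omega> i) (Ie0 n \<omega>)"
    if pr: "prime n" and i: "2 \<le> i" "i \<le> n - 1" for i
  proof -
    have ndvd: "\<not> n dvd i"
    proof
      assume "n dvd i"
      moreover have "i > 0" using i by simp
      ultimately have "n \<le> i" by (rule dvd_imp_le)
      thus False using i n2 by simp
    qed
    have "coprime n i" by (rule prime_imp_coprime[OF pr ndvd])
    hence g: "gcd i n = 1" by (simp add: coprime_iff_gcd_eq_1 gcd.commute)
    have i0: "i > 0" using i by simp
    from inverse_ex[OF i0 g] obtain m' where im: "(i * m') mod n = 1" ..
    show ?thesis using part2[OF n1 w im, of 1] by simp
  qed
  show ?thesis using A B C by blast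
qed


end
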